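(* In Model A below with $d$ odd, let $I:=-\inf_{t\in\mathbb{R}}\log\big(\varrho(1-\varrho)e^{t}+\tfrac12+\tfrac12(1-2\varrho+2\varrho^2)e^{-t}\big)$ and $\tilde I:=-\inf_{t\in\mathbb{R}}\log\big((\varrho(1-\varrho)+\tfrac14)e^{t}+(\tfrac12(1-2\varrho+2\varrho^2)+\tfrac14)e^{-t}\big)$. Then $$\lim_{d\to\infty,\ d\text{ odd}}\frac1d\log\mathbb{P}\big(\chi(w)=2\text{ under the $c$-segmentation rule with }c=d\big)=-\tilde I,$$ and $I\ge\tilde I$.
   Context: Segmentation rule. Let $d,c$ be positive integers with $c\mid d$. For $x\in\mathbb{R}^d$ and $1\le j\le c$ let $x_j\in\mathbb{R}^{d/c}$ denote its $j$-th block $(x_{(j-1)d/c+1},\dots,x_{jd/c})$, so that $x=x_1\circ\cdots\circ x_c$ (concatenation). Given dictionary words $w^1,\dots,w^K\in\mathbb{R}^d$ ($w^k$ representing class $k$) and a test word $w\in\mathbb{R}^d$, for each $j$ let $U_j\in\{1,\dots,K\}$ be an index $k$ minimizing the Euclidean distance $\|w_j-w^k_j\|$ in $\mathbb{R}^{d/c}$, chosen uniformly at random among all minimizers (independently of everything else). The $c$-segmentation rule assigns to $w$ the class $\chi(w)\in\operatorname{argmax}_k\#\{j:U_j=k\}$, chosen uniformly at random among all maximizers. The case $c=1$ is the Euclidean (nearest-neighbour) rule and $c=d$ is coordinate-by-coordinate comparison. Probabilities are over all random objects including tie-breaks. Model A. Fix $\varrho\in(0,\tfrac12)$. Let $m_1,m_2$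 be independent and uniformly distributed on $\{-1,+1\}^d$. Let $Y^{(0)},Y^{(1)},Y^{(2)}$ be independent random vectors in $\{-1,+1\}^d$, independent of $m_1,m_2$, each with i.i.d. coordinates satisfying $\mathbb{P}(Y_i=1)=1-\varrho$, $\mathbb{P}(Y_i=-1)=\varrho$. Write $x\times y$ for the coordinatewise product. There are $K=2$ classes; the dictionary words are $w^1=Y^{(1)}\times m_1$ (class 1) and $w^2=Y^{(2)}\times m_2$ (class 2), and the test word is $w=Y^{(0)}\times m_1$ (true class 1). *)

theory Defs
  imports "HOL-Probability.Probability"
begin

(* Vectors in R^d are functions nat => real, coordinates 0..d-1 (0-based). *)

definition block :: "nat \<Rightarrow> nat \<Rightarrow> (nat \<Rightarrow> real) \<Rightarrow> nat \<Rightarrow> (nat \<Rightarrow> real)" where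
  "block d c x j = (\<lambda>i. if i < d div c then x (j * (d div c) + i) else 0)"

definition block_dist :: "nat \<Rightarrow> nat \<Rightarrow> (nat \<Rightarrow> real) \<Rightarrow> (nat \<Rightarrow> real) \<Rightarrow> nat \<Rightarrow> real" where
  "block_dist d c x y j = sqrt (\<Sum>i<d div c. (block d c x j i - block d c y j i)\<^sup>2)"

definition block_argmin :: "nat \<Rightarrow> nat \<Rightarrow> nat \<Rightarrow> (nat \<Rightarrow> nat \<Rightarrow> real) \<Rightarrow> (nat \<Rightarrow> real) \<Rightarrow> nat \<Rightarrow> nat set" where
  "block_argmin d c K ws w j =
     {k \<in> {1..K}. \<forall>k' \<in> {1..K}. block_dist d c w (ws k) j \<le> block_dist d c w (ws k') j}"

definition vote_argmax :: "nat \<Rightarrow> nat \<Rightarrow> (nat \<Rightarrow> nat) \<Rightarrow> nat set" where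
  "vote_argmax c K U =
     {k \<in> {1..K}. \<forall>k' \<in> {1..K}. card {j \<in> {..<c}. U j = k'} \<le> card {j \<in> {..<c}. U j = k}}"

(* c-segmentation rule: distribution of the assigned class chi(w), given
   dictionary words ws 1 .. ws K and test word w; U_j independent uniform
   tie-breaks, final uniform tie-break among maximisers. *)
definition seg_rule :: "nat \<Rightarrow> nat \<Rightarrow> nat \<Rightarrow> (nat \<Rightarrow> nat \<Rightarrow> real) \<Rightarrow> (nat \<Rightarrow> real) \<Rightarrow> nat pmf" where
  "seg_rule d c K ws w =
     do {
       U \<leftarrow> Pi_pmf {..<c} 0 (\<lambda>j. pmf_of_set (block_argmin d c K ws w j));
       pmf_of_set (vote_argmax c K U)
     }"

definition unif_sign :: "nat \<Rightarrow> (nat \<Rightarrow> real) pmf" where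
  "unif_sign d = Pi_pmf {..<d} 0 (\<lambda>_. pmf_of_set {-1, 1})"

definition noise :: "real \<Rightarrow> nat \<Rightarrow> (nat \<Rightarrow> real) pmf" where
  "noise \<rho> d = Pi_pmf {..<d} 0 (\<lambda>_. map_pmf (\<lambda>b. if b then 1 else -1) (bernoulli_pmf (1 - \<rho>)))"

definition coord_mult :: "(nat \<Rightarrow> real) \<Rightarrow> (nat \<Rightarrow> real) \<Rightarrow> (nat \<Rightarrow> real)" where
  "coord_mult x y = (\<lambda>i. x i * y i)"

definition modelA_class :: "real \<Rightarrow> nat \<Rightarrow> nat \<Rightarrow> nat pmf" where
  "modelA_class \<rho> d c =
     do {
       m1 \<leftarrow> unif_sign d;
       m2 \<leftarrow> unif_sign d;
       Y0 \<leftarrow> noise \<rho> d;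
       Y1 \<leftarrow> noise \<rho> d;
       Y2 \<leftarrow> noise \<rho> d;
       seg_rule d c 2 (\<lambda>k. if k = 1 then coord_mult Y1 m1 else coord_mult Y2 m2) (coord_mult Y0 m1)
     }"

end

theory Submission
  imports Defs
begin


definition argS :: "real \<Rightarrow> real \<Rightarrow> real \<Rightarrow> nat set" where
  "argS x u v = {k \<in> {1..2::nat}. \<forall>k' \<in> {1..2::nat}. \<bar>x - (if k = 1 then u else v)\<bar> \<le> \<bar>x - (if k' = 1 then u else v)\<bar>}"

definition G :: "real \<Rightarrow> real \<Rightarrow> real \<Rightarrow> real \<Rightarrow> real \<Rightarrow> nat pmf" where
  "G a b y0 y1 y2 = pmf_of_set (argS (y0*a) (y1*a) (y2*b))"

definition N0 :: "real \<Rightarrow> real pmf" where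
  "N0 \<rho> = map_pmf (\<lambda>b. if b then 1 else -1) (bernoulli_pmf (1 - \<rho>))"

definition coordU :: "real \<Rightarrow> nat pmf" where
  "coordU \<rho> = do { a \<leftarrow> pmf_of_set {-1,1::real}; b \<leftarrow> pmf_of_set {-1,1::real};
     y0 \<leftarrow> N0 \<rho>; y1 \<leftarrow> N0 \<rho>; y2 \<leftarrow> N0 \<rho>; G a b y0 y1 y2}"

lemma argS_vals:
  "argS x u v = (if \<bar>x - u\<bar> < \<bar>x - v\<bar> then {1} else if \<bar>x - v\<bar> < \<bar>x - u\<bar> then {2} else {1,2})"
  unfolding argS_def by auto

lemma coordU_eq:
  assumes "0 \<le> \<rho>" "\<rho> \<le> 1"
  shows "coordU \<rho> = map_pmf (\<lambda>b. if b then 2 else 1) (bernoulli_pmf (\<rho> * (1 - \<rho>) + 1/4))"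
proof (rule pmf_eqI)
  fix x :: nat
  have p: "0 \<le> \<rho> * (1 - \<rho>) + 1/4" "\<rho> * (1 - \<rho>) + 1/4 \<le> 1"
  proof -
    have "0 \<le> (\<rho> - 1/2)^2" by simp
    hence "\<rho> * (1 - \<rho>) \<le> 1/4" by (simp add: power2_eq_square algebra_simps)
    thus "0 \<le> \<rho> * (1 - \<rho>) + 1/4" "\<rho> * (1 - \<rho>) + 1/4 \<le> 1" using assms by auto
  qed
  have r: "pmf (map_pmf (\<lambda>b. if b then 2 else 1) (bernoulli_pmf (\<rho> * (1 - \<rho>) + 1/4))) x
     = (\<rho> * (1 - \<rho>) + 1/4) * of_bool (x = 2) + (1 - (\<rho> * (1 - \<rho>) + 1/4)) * of_bool (x = 1)"
    using p by (simp add: map_pmf_def pmf_bind indicator_def)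
  show "pmf (coordU \<rho>) x = pmf (map_pmf (\<lambda>b. if b then 2 else 1) (bernoulli_pmf (\<rho> * (1 - \<rho>) + 1/4))) x"
    unfolding r
    using assms p
    apply (simp add: coordU_def G_def N0_def pmf_bind integral_pmf_of_set argS_vals pmf_of_set_singleton
       indicator_def)
    apply (auto simp: field_simps)
    done
qed

lemma block_argmin_dd:
  assumes "0 < d" "j < d"
  shows "block_argmin d d 2 ws w j = argS (w j) (ws 1 j) (ws 2 j)"
proof -
  have bd: "block_dist d d x y j = \<bar>x j - y j\<bar>" for x y
    using assms by (simp add: block_dist_def block_def)
  have e: "(\<forall>k'\<in>{1..2::nat}. P k') \<longleftrightarrow> P 1 \<and> P 2" for P by (auto simp: le_Suc_eq numeral_2_eq_2)
  have e2: "k \<in> {1..2::nat} \<longleftrightarrow> k = 1 \<or> k = 2" for k by auto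
  show ?thesis
    unfolding block_argmin_def argS_def bd
    apply (rule set_eqI)
    apply (simp only: mem_Collect_eq e e2)
    apply auto
    done
qed

lemma collapse:
  assumes "finite A"
  shows "bind_pmf (Pi_pmf A d' p) (\<lambda>f. Pi_pmf A d (\<lambda>x. q x (f x))) = Pi_pmf A d (\<lambda>x. bind_pmf (p x) (q x))"
  using Pi_pmf_bind[OF assms, of d p q d'] by simp

lemma inner_eq:
  fixes d :: nat
  defines "A \<equiv> {..<d}"
  shows "do {m1 \<leftarrow> unif_sign d; m2 \<leftarrow> unif_sign d; Y0 \<leftarrow> noise \<rho> d; Y1 \<leftarrow> noise \<rho> d; Y2 \<leftarrow> noise \<rho> d;
      Pi_pmf A 0 (\<lambda>j. G (m1 j) (m2 j) (Y0 j) (Y1 j) (Y2 j))} = Pi_pmf A 0 (\<lambda>_. coordU \<rho>)"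
proof -
  have fA: "finite A" by (simp add: A_def)
  have n: "noise \<rho> d = Pi_pmf A 0 (\<lambda>_. N0 \<rho>)" by (simp add: noise_def N0_def A_def)
  have u: "unif_sign d = Pi_pmf A 0 (\<lambda>_. pmf_of_set {-1,1})" by (simp add: unif_sign_def A_def)
  show ?thesis
  proof -
    have s5: "Pi_pmf A 0 (\<lambda>_. N0 \<rho>) \<bind> (\<lambda>Y2. Pi_pmf A 0 (\<lambda>j. G (m1 j) (m2 j) (Y0 j) (Y1 j) (Y2 j)))
       = Pi_pmf A 0 (\<lambda>j. N0 \<rho> \<bind> G (m1 j) (m2 j) (Y0 j) (Y1 j))" for m1 m2 Y0 Y1
      by (rule collapse[OF fA])
    have s4: "Pi_pmf A 0 (\<lambda>_. N0 \<rho>) \<bind> (\<lambda>Y1. Pi_pmf A 0 (\<lambda>j. N0 \<rho> \<bind> G (m1 j) (m2 j) (Y0 j) (Y1 j)))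
       = Pi_pmf A 0 (\<lambda>j. N0 \<rho> \<bind> (\<lambda>y1. N0 \<rho> \<bind> G (m1 j) (m2 j) (Y0 j) y1))" for m1 m2 Y0
      by (rule collapse[OF fA])
    have s3: "Pi_pmf A 0 (\<lambda>_. N0 \<rho>) \<bind> (\<lambda>Y0. Pi_pmf A 0 (\<lambda>j. N0 \<rho> \<bind> (\<lambda>y1. N0 \<rho> \<bind> G (m1 j) (m2 j) (Y0 j) y1)))
       = Pi_pmf A 0 (\<lambda>j. N0 \<rho> \<bind> (\<lambda>y0. N0 \<rho> \<bind> (\<lambda>y1. N0 \<rho> \<bind> G (m1 j) (m2 j) y0 y1)))" for m1 m2
      by (rule collapse[OF fA])
    have s2: "Pi_pmf A 0 (\<lambda>_. pmf_of_set {-1,1}) \<bind> (\<lambda>m2. Pi_pmf A 0 (\<lambda>j. N0 \<rho> \<bind> (\<lambda>y0. N0 \<rho> \<bind> (\<lambda>y1. N0 \<rho> \<bind> G (m1 j) (m2 j) y0 y1))))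
       = Pi_pmf A 0 (\<lambda>j. pmf_of_set {-1,1} \<bind> (\<lambda>b. N0 \<rho> \<bind> (\<lambda>y0. N0 \<rho> \<bind> (\<lambda>y1. N0 \<rho> \<bind> G (m1 j) b y0 y1))))" for m1
      by (rule collapse[OF fA])
    have s1: "Pi_pmf A 0 (\<lambda>_. pmf_of_set {-1,1}) \<bind> (\<lambda>m1. Pi_pmf A 0 (\<lambda>j. pmf_of_set {-1,1} \<bind> (\<lambda>b. N0 \<rho> \<bind> (\<lambda>y0. N0 \<rho> \<bind> (\<lambda>y1. N0 \<rho> \<bind> G (m1 j) b y0 y1)))))
       = Pi_pmf A 0 (\<lambda>j. pmf_of_set {-1,1} \<bind> (\<lambda>a. pmf_of_set {-1,1} \<bind> (\<lambda>b. N0 \<rho> \<bind> (\<lambda>y0. N0 \<rho> \<bind> (\<lambda>y1. N0 \<rho> \<bind> G a b y0 y1)))))"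
      by (rule collapse[OF fA])
    show ?thesis unfolding n u coordU_def s5 s4 s3 s2 s1 ..
  qed
qed

lemma vote_vals:
  "vote_argmax c 2 U = (if card {j\<in>{..<c}. U j = 1} < card {j\<in>{..<c}. U j = 2} then {2}
     else if card {j\<in>{..<c}. U j = 2} < card {j\<in>{..<c}. U j = 1} then {1} else {1,2})"
proof -
  have e: "{1..2::nat} = {1,2}" by auto
  show ?thesis unfolding vote_argmax_def e by auto
qed

lemma vote_eq:
  assumes "odd d"
  shows "vote_argmax d 2 (\<lambda>x. if x \<in> {..<d} then (if f x then 2 else 1) else 0)
     = {if d < 2 * card {x\<in>{..<d}. f x} then 2 else 1::nat}"
proof -
  define c where "c = card {x\<in>{..<d}. f x}"
  have c2: "{j \<in> {..<d}. (if j \<in> {..<d} then (if f j then 2 else 1) else 0) = (2::nat)} = {x\<in>{..<d}. f x}"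
    by auto
  have c1: "{j \<in> {..<d}. (if j \<in> {..<d} then (if f j then 2 else 1) else 0) = (1::nat)} = {x\<in>{..<d}. \<not> f x}"
    by auto
  have "card {x\<in>{..<d}. f x} + card {x\<in>{..<d}. \<not> f x} = card ({x\<in>{..<d}. f x} \<union> {x\<in>{..<d}. \<not> f x})"
    by (rule card_Un_disjoint[symmetric]) auto
  also have "{x\<in>{..<d}. f x} \<union> {x\<in>{..<d}. \<not> f x} = {..<d}" by auto
  finally have c1': "card {x\<in>{..<d}. \<not> f x} = d - c" unfolding c_def by simp
  have ne: "d \<noteq> 2 * c" using assms by auto
  show ?thesis
    unfolding vote_vals c1 c2 c1' c_def[symmetric]
    using ne by auto
qed

lemma modelA_eq:
  assumes "0 \<le> \<rho>" "\<rho> \<le> 1" "odd d"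
  shows "modelA_class \<rho> d d = map_pmf (\<lambda>k. if d < 2*k then 2 else 1) (binomial_pmf d (\<rho>*(1-\<rho>)+1/4))"
proof -
  define A where "A = {..<d}"
  define p where "p = \<rho>*(1-\<rho>)+1/4"
  define V where "V = (\<lambda>U. pmf_of_set (vote_argmax d 2 U))"
  have fA: "finite A" by (simp add: A_def)
  have d0: "0 < d" using assms(3) by (cases d) auto
  have p01: "p \<in> {0..1}"
  proof -
    have "0 \<le> (\<rho> - 1/2)^2" by simp
    hence "\<rho> * (1 - \<rho>) \<le> 1/4" by (simp add: power2_eq_square algebra_simps)
    thus ?thesis using assms by (auto simp: p_def)
  qed
  have seg: "seg_rule d d 2 (\<lambda>k. if k = 1 then coord_mult Y1 m1 else coord_mult Y2 m2) (coord_mult Y0 m1)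
     = Pi_pmf A 0 (\<lambda>j. G (m1 j) (m2 j) (Y0 j) (Y1 j) (Y2 j)) \<bind> V" for m1 m2 Y0 Y1 Y2
    unfolding seg_rule_def V_def A_def G_def
    by (intro bind_pmf_cong Pi_pmf_cong refl) (simp add: block_argmin_dd d0 coord_mult_def)
  have "modelA_class \<rho> d d = (do {m1 \<leftarrow> unif_sign d; m2 \<leftarrow> unif_sign d; Y0 \<leftarrow> noise \<rho> d; Y1 \<leftarrow> noise \<rho> d; Y2 \<leftarrow> noise \<rho> d;
      Pi_pmf A 0 (\<lambda>j. G (m1 j) (m2 j) (Y0 j) (Y1 j) (Y2 j))}) \<bind> V"
    unfolding modelA_class_def seg by (simp add: bind_assoc_pmf)
  also have "\<dots> = Pi_pmf A 0 (\<lambda>_. coordU \<rho>) \<bind> V"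
    using inner_eq[of d \<rho>] by (simp add: A_def)
  also have "Pi_pmf A 0 (\<lambda>_. coordU \<rho>) = map_pmf (\<lambda>f x. if x \<in> A then (if f x then 2 else 1) else 0) (Pi_pmf A False (\<lambda>_. bernoulli_pmf p))"
  proof -
    have "Pi_pmf A 0 (\<lambda>_. coordU \<rho>) = Pi_pmf A 0 (\<lambda>_. map_pmf (\<lambda>b. if b then 2 else 1) (bernoulli_pmf p))"
      using coordU_eq[OF assms(1,2)] by (simp add: p_def)
    also have "\<dots> = map_pmf (\<lambda>f x. if x \<in> A then f x else 0) (Pi_pmf A 1 (\<lambda>_. map_pmf (\<lambda>b. if b then 2 else 1) (bernoulli_pmf p)))"
      by (rule Pi_pmf_default_swap[symmetric, OF fA])
    also have "Pi_pmf A 1 (\<lambda>_. map_pmf (\<lambda>b. if b then 2 else (1::nat)) (bernoulli_pmf p)) = map_pmf (\<lambda>g. (\<lambda>b. if b then 2 else 1) \<circ> g) (Pi_pmf A False (\<lambda>_. bernoulli_pmf p))"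
      by (rule Pi_pmf_map[OF fA]) simp
    finally show ?thesis by (simp add: map_pmf_comp comp_def)
  qed
  also have "map_pmf (\<lambda>f x. if x \<in> A then (if f x then 2 else 1) else 0) (Pi_pmf A False (\<lambda>_. bernoulli_pmf p)) \<bind> V
      = map_pmf (\<lambda>f. if d < 2 * card {x\<in>A. f x} then 2 else 1) (Pi_pmf A False (\<lambda>_. bernoulli_pmf p))"
    unfolding bind_map_pmf V_def A_def vote_eq[OF assms(3)] pmf_of_set_singleton
    by (simp add: map_pmf_def)
  also have "\<dots> = map_pmf (\<lambda>k. if d < 2*k then 2 else 1) (map_pmf (\<lambda>f. card {x\<in>A. f x}) (Pi_pmf A False (\<lambda>_. bernoulli_pmf p)))"
    by (simp add: map_pmf_comp)
  also have "map_pmf (\<lambda>f. card {x\<in>A. f x}) (Pi_pmf A False (\<lambda>_. bernoulli_pmf p)) = binomial_pmf d p"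
    by (rule binomial_pmf_altdef'[symmetric, OF fA _ p01]) (simp add: A_def)
  finally show ?thesis by (simp add: p_def)
qed



lemma binom_prob_sum:
  fixes p :: real and n :: nat
  assumes "0 < p" "p < 1"
  shows "measure_pmf.prob (binomial_pmf (2*n+1) p) {k. 2*n+1 < 2*k}
       = (\<Sum>k\<in>{Suc n..2*n+1}. real ((2*n+1) choose k) * p^k * (1-p)^(2*n+1-k))"
proof -
  have "measure_pmf.prob (binomial_pmf (2*n+1) p) {k. 2*n+1 < 2*k}
      = measure_pmf.prob (binomial_pmf (2*n+1) p) ({k. 2*n+1 < 2*k} \<inter> set_pmf (binomial_pmf (2*n+1) p))"
    by (simp add: measure_Int_set_pmf)
  also have "{k. 2*n+1 < 2*k} \<inter> set_pmf (binomial_pmf (2*n+1) p) = {Suc n..2*n+1}"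
    using assms by auto
  also have "measure_pmf.prob (binomial_pmf (2*n+1) p) {Suc n..2*n+1} = (\<Sum>k\<in>{Suc n..2*n+1}. pmf (binomial_pmf (2*n+1) p) k)"
    by (rule measure_measure_pmf_finite) simp
  finally show ?thesis using assms by simp
qed

lemma term_bound:
  fixes p :: real and n k :: nat
  assumes "0 < p" "p \<le> 1/2" "Suc n \<le> k" "k \<le> 2*n+1"
  shows "p^k * (1-p)^(2*n+1-k) \<le> p^(n+1) * (1-p)^n"
proof -
  define i where "i = k - (n + 1)"
  have k: "k = n + 1 + i" using assms(3) by (simp add: i_def)
  have i: "i \<le> n" using assms(4) k by simp
  have "p^i \<le> (1-p)^i" using assms by (intro power_mono) auto
  hence "p^(n+1) * (p^i * (1-p)^(n-i)) \<le> p^(n+1) * ((1-p)^i * (1-p)^(n-i))"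
    using assms by (intro mult_left_mono mult_right_mono) auto
  also have "(1-p)^i * (1-p)^(n-i) = (1-p)^n" using i by (simp flip: power_add)
  also have "p^(n+1) * (p^i * (1-p)^(n-i)) = p^k * (1-p)^(2*n+1-k)"
    using i k by (simp add: power_add)
  finally show ?thesis .
qed

lemma binom_bounds:
  fixes p :: real and n :: nat
  assumes "0 < p" "p < 1/2"
  defines "S \<equiv> (\<Sum>k\<in>{Suc n..2*n+1}. real ((2*n+1) choose k) * p^k * (1-p)^(2*n+1-k))"
  shows "S \<le> 2^(2*n+1) * (p^(n+1) * (1-p)^n)"
    and "2^(2*n+1) / real (2*n+2) * (p^(n+1) * (1-p)^n) \<le> S"
proof -
  let ?M = "p^(n+1) * (1-p)^n"
  have M0: "0 \<le> ?M" using assms by simp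
  have r: "(\<Sum>k\<le>2*n+1. real ((2*n+1) choose k)) = 2^(2*n+1)"
  proof -
    have "real (\<Sum>k\<le>2*n+1. (2*n+1) choose k) = real (2^(2*n+1))" by (simp only: choose_row_sum)
    thus ?thesis by simp
  qed
  have "S \<le> (\<Sum>k\<in>{Suc n..2*n+1}. real ((2*n+1) choose k) * ?M)"
    unfolding S_def
    by (intro sum_mono) (use term_bound[of p] assms in \<open>auto simp: mult.assoc intro!: mult_left_mono\<close>)
  also have "\<dots> \<le> (\<Sum>k\<le>2*n+1. real ((2*n+1) choose k) * ?M)"
    by (intro sum_mono2) (use M0 in auto)
  also have "\<dots> = 2^(2*n+1) * ?M"
    by (simp only: sum_distrib_right[symmetric] r)
  finally show "S \<le> 2^(2*n+1) * ?M" .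
  have "(2::real)^(2*n+1) = (\<Sum>k\<le>2*n+1. real ((2*n+1) choose k))"
    by (rule r[symmetric])
  also have "\<dots> \<le> (\<Sum>k\<le>2*n+1. real ((2*n+1) choose n))"
    by (intro sum_mono) (use binomial_maximum[of "2*n+1"] in simp)
  also have "\<dots> = real (2*n+2) * real ((2*n+1) choose (Suc n))"
    using central_binomial_odd[of "2*n+1"] by simp
  finally have c: "2^(2*n+1) / real (2*n+2) \<le> real ((2*n+1) choose (Suc n))"
    by (simp add: field_simps)
  have "2^(2*n+1) / real (2*n+2) * ?M \<le> real ((2*n+1) choose (Suc n)) * ?M"
    by (intro mult_right_mono c M0)
  also have "\<dots> = real ((2*n+1) choose Suc n) * p ^ Suc n * (1 - p) ^ (2 * n + 1 - Suc n)"
    by simp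
  also have "\<dots> \<le> S" unfolding S_def
    by (rule member_le_sum[where f = "\<lambda>k. real ((2*n+1) choose k) * p^k * (1-p)^(2*n+1-k)"])
       (use assms in auto)
  finally show "2^(2*n+1) / real (2*n+2) * ?M \<le> S" .
qed



lemma exp_pair_ge:
  fixes u v :: real
  shows "2 * exp ((u + v)/2) \<le> exp u + exp v"
proof -
  have "sqrt (exp u * exp v) \<le> (exp u + exp v)/2" by (rule arith_geo_mean_sqrt) auto
  moreover have "sqrt (exp u * exp v) = exp ((u+v)/2)"
  proof -
    have "exp u * exp v = (exp ((u+v)/2))^2" by (simp add: power2_eq_square flip: exp_add)
    thus ?thesis by simp
  qed
  ultimately show ?thesis by simp
qed

lemma INF_amgm:
  fixes a b :: real
  assumes "0 < a" "0 < b"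
  shows "(INF t::real. ln (a * exp t + b * exp (- t))) = ln 2 + (ln a + ln b)/2"
proof -
  define m where "m = (ln a + ln b)/2"
  have low: "ln 2 + m \<le> ln (a * exp t + b * exp (- t))" for t
  proof -
    have ea: "a * exp t = exp (ln a + t)" using assms by (simp add: exp_add)
    have eb: "b * exp (-t) = exp (ln b - t)" using assms by (simp add: exp_diff exp_minus field_simps)
    have "2 * exp m \<le> a * exp t + b * exp (- t)"
      unfolding ea eb m_def using exp_pair_ge[of "ln a + t" "ln b - t"] by simp
    hence "ln (2 * exp m) \<le> ln (a * exp t + b * exp (- t))" by (intro ln_mono) auto
    thus ?thesis by (simp add: ln_mult)
  qed
  define t0 where "t0 = (ln b - ln a)/2"
  have att: "ln (a * exp t0 + b * exp (- t0)) = ln 2 + m"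
  proof -
    have "a * exp t0 = exp (ln a + t0)" using assms by (simp add: exp_add)
    also have "ln a + t0 = m" by (simp add: t0_def m_def field_simps)
    finally have ea: "a * exp t0 = exp m" .
    have "b * exp (-t0) = exp (ln b - t0)" using assms by (simp add: exp_diff exp_minus field_simps)
    also have "ln b - t0 = m" by (simp add: t0_def m_def field_simps)
    finally have eb: "b * exp (-t0) = exp m" .
    show ?thesis unfolding ea eb by (simp add: ln_mult)
  qed
  show ?thesis
  proof (rule antisym)
    have "(INF t. ln (a * exp t + b * exp (- t))) \<le> ln (a * exp t0 + b * exp (- t0))"
      by (rule cINF_lower) (auto intro!: bdd_belowI2 low)
    thus "(INF t. ln (a * exp t + b * exp (- t))) \<le> ln 2 + (ln a + ln b)/2" using att m_def by simp
  next
    show "ln 2 + (ln a + ln b)/2 \<le> (INF t. ln (a * exp t + b * exp (- t)))"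
      by (rule cINF_greatest) (use low m_def in auto)
  qed
qed

lemma INF_compare:
  fixes a b :: real
  assumes "0 < a" "0 < b"
  shows "(INF t::real. ln (a * exp t + 1/2 + b * exp (- t))) \<le> (INF t::real. ln ((a + 1/4) * exp t + (b + 1/4) * exp (- t)))"
proof (rule cINF_greatest)
  show "UNIV \<noteq> {}" by simp
  fix t :: real
  have pos: "0 < a * exp t + 1/2 + b * exp (- t)" for t using assms by (intro add_pos_pos) auto
  have bdd: "bdd_below (range (\<lambda>t. ln (a * exp t + 1/2 + b * exp (- t))))"
  proof (rule bdd_belowI2)
    fix t show "ln (1/2) \<le> ln (a * exp t + 1/2 + b * exp (- t))"
      using assms by (intro ln_mono) (auto intro: add_nonneg_nonneg)
  qed
  have "1 \<le> (exp t + exp (-t))/2"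
    using exp_pair_ge[of t "-t"] by simp
  hence "a * exp t + 1/2 + b * exp (- t) \<le> (a + 1/4) * exp t + (b + 1/4) * exp (- t)"
    by (simp add: algebra_simps)
  hence "ln (a * exp t + 1/2 + b * exp (- t)) \<le> ln ((a + 1/4) * exp t + (b + 1/4) * exp (- t))"
    using pos by (intro ln_mono) auto
  moreover have "(INF t::real. ln (a * exp t + 1/2 + b * exp (- t))) \<le> ln (a * exp t + 1/2 + b * exp (- t))"
    by (rule cINF_lower[OF bdd]) simp
  ultimately show "(INF t::real. ln (a * exp t + 1/2 + b * exp (- t))) \<le> ln ((a + 1/4) * exp t + (b + 1/4) * exp (- t))"
    by linarith
qed

lemma lim_inv_odd: "(\<lambda>n. 1 / real (2*n+1)) \<longlonglongrightarrow> 0"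
proof -
  have "(\<lambda>n. inverse (real n)) \<longlonglongrightarrow> 0" by (rule lim_inverse_n)
  hence "((\<lambda>n. inverse (real n)) \<circ> (\<lambda>n. 2*n+1)) \<longlonglongrightarrow> 0"
    by (rule LIMSEQ_subseq_LIMSEQ) (auto simp: strict_mono_def)
  thus ?thesis by (simp add: o_def divide_inverse)
qed

lemma lim_ln_odd: "(\<lambda>n. ln (real (2*n+2)) / real (2*n+1)) \<longlonglongrightarrow> 0"
proof -
  have "(\<lambda>n. ln (real n) / real n) \<longlonglongrightarrow> 0"
    using filterlim_compose[OF ln_x_over_x_tendsto_0 filterlim_real_sequentially] by simp
  hence h: "((\<lambda>n. ln (real n) / real n) \<circ> (\<lambda>n. 2*n+2)) \<longlonglongrightarrow> 0"
    by (rule LIMSEQ_subseq_LIMSEQ) (auto simp: strict_mono_def)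
  have l: "(\<lambda>n. 2 * (ln (real (2*n+2)) / real (2*n+2))) \<longlonglongrightarrow> 0"
    using tendsto_mult_right_zero[OF h, of 2] by (simp only: o_def)
  show ?thesis
  proof (rule tendsto_sandwich[OF _ _ tendsto_const l])
    show "\<forall>\<^sub>F n in sequentially. 0 \<le> ln (real (2*n+2)) / real (2*n+1)" by auto
    show "\<forall>\<^sub>F n in sequentially. ln (real (2*n+2)) / real (2*n+1) \<le> 2 * (ln (real (2*n+2)) / real (2*n+2))"
    proof (rule always_eventually, rule allI)
      fix n :: nat
      have l0: "0 \<le> ln (real (2*n+2))" by simp
      have "ln (real (2*n+2)) * real (2*n+2) \<le> 2 * ln (real (2*n+2)) * real (2*n+1)"
        using l0 by (simp add: algebra_simps)
      thus "ln (real (2*n+2)) / real (2*n+1) \<le> 2 * (ln (real (2*n+2)) / real (2*n+2))"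
        by (simp add: field_simps)
    qed
  qed
qed



theorem mainTheorem2:
  fixes \<rho> I It :: real
  assumes "0 < \<rho>" and "\<rho> < 1/2"
    and "I = - (INF t::real. ln (\<rho> * (1 - \<rho>) * exp t + 1/2
                 + 1/2 * (1 - 2 * \<rho> + 2 * \<rho>\<^sup>2) * exp (- t)))"
    and "It = - (INF t::real. ln ((\<rho> * (1 - \<rho>) + 1/4) * exp t
                 + (1/2 * (1 - 2 * \<rho> + 2 * \<rho>\<^sup>2) + 1/4) * exp (- t)))"
  shows "((\<lambda>n. ln (measure_pmf.prob (modelA_class \<rho> (2 * n + 1) (2 * n + 1)) {2})
              / real (2 * n + 1)) \<longlonglongrightarrow> - It)
         \<and> I \<ge> It"
proof -
  define p where "p = \<rho> * (1 - \<rho>) + 1/4"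
  have q: "1/2 * (1 - 2 * \<rho> + 2 * \<rho>\<^sup>2) + 1/4 = 1 - p"
    by (simp add: p_def power2_eq_square algebra_simps)
  have a0: "0 < \<rho> * (1 - \<rho>)" using assms(1,2) by simp
  have p0: "0 < p" using a0 by (simp add: p_def)
  have p1: "p < 1/2"
  proof -
    have "0 < (\<rho> - 1/2)^2" using assms(2) by simp
    thus ?thesis by (simp add: p_def power2_eq_square algebra_simps)
  qed
  have b0: "0 < 1/2 * (1 - 2 * \<rho> + 2 * \<rho>\<^sup>2)"
  proof -
    have "0 < (1-\<rho>)^2 + \<rho>^2" using assms(1) by (intro add_nonneg_pos) auto
    thus ?thesis by (simp add: power2_eq_square algebra_simps)
  qed
  define c where "c = ln 2 + (ln p + ln (1 - p))/2"
  define e where "e = (ln p - ln (1 - p))/2"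
  have It: "It = - c"
    unfolding assms(4) q using INF_amgm[of p "1 - p"] p0 p1 by (simp add: c_def p_def)
  have IIt: "I \<ge> It"
    unfolding assms(3,4) using INF_compare[OF a0 b0] by simp
  define P where "P n = measure_pmf.prob (modelA_class \<rho> (2 * n + 1) (2 * n + 1)) {2}" for n
  define M where "M n = p^(n+1) * (1-p)^n" for n :: nat
  have PS: "P n = (\<Sum>k\<in>{Suc n..2*n+1}. real ((2*n+1) choose k) * p^k * (1-p)^(2*n+1-k))" for n
  proof -
    have "P n = measure_pmf.prob (binomial_pmf (2*n+1) p) {k. 2*n+1 < 2*k}"
      unfolding P_def using assms(1,2)
      by (subst modelA_eq) (auto simp: p_def vimage_def)
    thus ?thesis using binom_prob_sum[of p n] p0 p1 by simp
  qed
  have up: "P n \<le> 2^(2*n+1) * M n" for n using binom_bounds(1)[OF p0 p1, of n] PS M_def by simp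
  have lo: "2^(2*n+1) / real (2*n+2) * M n \<le> P n" for n using binom_bounds(2)[OF p0 p1, of n] PS M_def by simp
  have M0: "0 < M n" for n using p0 p1 by (simp add: M_def)
  have lnM: "ln (2^(2*n+1) * M n) = real (2*n+1) * (c + e / real (2*n+1))" for n
  proof -
    have "ln (2^(2*n+1) * M n) = real (2*n+1) * ln 2 + real (n+1) * ln p + real n * ln (1-p)"
      using p0 p1 by (simp add: M_def ln_mult ln_realpow) (simp add: algebra_simps)
    also have "\<dots> = real (2*n+1) * (c + e / real (2*n+1))"
      by (simp add: c_def e_def field_simps)
    finally show ?thesis .
  qed
  have ub: "ln (P n) / real (2*n+1) \<le> c + e / real (2*n+1)" for n
  proof -
    have "0 < 2^(2*n+1) / real (2*n+2) * M n" using M0[of n] by simp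
    hence "ln (P n) \<le> ln (2^(2*n+1) * M n)" using up[of n] lo[of n] by (intro ln_mono) auto
    thus ?thesis unfolding lnM by (simp add: field_simps)
  qed
  have lb: "c + e / real (2*n+1) - ln (real (2*n+2)) / real (2*n+1) \<le> ln (P n) / real (2*n+1)" for n
  proof -
    have pos: "0 < 2^(2*n+1) / real (2*n+2) * M n" using M0[of n] by simp
    hence "ln (2^(2*n+1) / real (2*n+2) * M n) \<le> ln (P n)" using lo[of n] by (intro ln_mono) auto
    moreover have "ln (2^(2*n+1) / real (2*n+2) * M n) = ln (2^(2*n+1) * M n) - ln (real (2*n+2))"
      using M0[of n] by (simp add: ln_mult ln_div)
    ultimately have "real (2*n+1) * (c + e / real (2*n+1)) - ln (real (2*n+2)) \<le> ln (P n)"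
      unfolding lnM by simp
    hence "(real (2*n+1) * (c + e / real (2*n+1)) - ln (real (2*n+2))) / real (2*n+1) \<le> ln (P n) / real (2*n+1)"
      by (intro divide_right_mono) auto
    moreover have "(real (2*n+1) * (c + e / real (2*n+1)) - ln (real (2*n+2))) / real (2*n+1)
       = c + e / real (2*n+1) - ln (real (2*n+2)) / real (2*n+1)"
      by (simp add: diff_divide_distrib)
    ultimately show ?thesis by simp
  qed
  have l1: "(\<lambda>n. c + e / real (2*n+1)) \<longlonglongrightarrow> c"
    using tendsto_add[OF tendsto_const tendsto_mult[OF tendsto_const lim_inv_odd, of e]] by simp
  have l2: "(\<lambda>n. c + e / real (2*n+1) - ln (real (2*n+2)) / real (2*n+1)) \<longlonglongrightarrow> c"
    using tendsto_diff[OF l1 lim_ln_odd] by simp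
  have "(\<lambda>n. ln (P n) / real (2*n+1)) \<longlonglongrightarrow> c"
    by (rule tendsto_sandwich[OF _ _ l2 l1]) (use lb ub in auto)
  thus ?thesis using It IIt by (simp add: P_def)
qed


end
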